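(* Let $q_1=(1,1,1)$, $q_2=(-1,-1,1)$, $q_3=(-1,1,-1)$, $q_4=(1,-1,-1)$, let $t\in(0,1)$ and $q_{j+4}=tq_j$ ($j=1,\dots,4$). Place nonzero mass $\mu_1$ at each vertex $q_1,\dots,q_4$ of the outer tetrahedron and nonzero mass $\mu_2$ at each vertex $q_5,\dots,q_8$ of the inner tetrahedron. There exists $\delta\in(0,1)$ such that: if $t\in(0,\delta)$ and the configuration is central, then $\mu_1$ and $\mu_2$ have the same sign; if $t\in(\delta,1)$ and the configuration is central, then $\mu_1$ and $\mu_2$ have opposite signs.
   Context: A configuration $q=(q_1,\dots,q_N)$ of distinct points in $\mathbb{R}^3$ with masses $m_1,\dots,m_N$ is a central configuration if there exists $c\in\mathbb{R}$ such that $\sum_{j\neq i} m_j\left(\frac{1}{|q_j-q_i|^3}-c\right)(q_j-q_i)=0$ for all $i=1,\dots,N$. *)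

theory Defs
  imports "HOL-Analysis.Analysis"
begin

definition central_config :: "nat \<Rightarrow> (nat \<Rightarrow> real^3) \<Rightarrow> (nat \<Rightarrow> real) \<Rightarrow> bool" where
  "central_config N q m \<longleftrightarrow> inj_on q {1..N} \<and>
     (\<exists>c::real. \<forall>i\<in>{1..N}.
        (\<Sum>j\<in>{1..N} - {i}. m j *\<^sub>R ((1 / norm (q j - q i) ^ 3 - c) *\<^sub>R (q j - q i))) = 0)"

definition tet_vertex :: "nat \<Rightarrow> real^3" where
  "tet_vertex j = (if j = 1 then vector [1, 1, 1]
                  else if j = 2 then vector [-1, -1, 1]
                  else if j = 3 then vector [-1, 1, -1]
                  else vector [1, -1, -1])"

definition nested_tet :: "real \<Rightarrow> nat \<Rightarrow> real^3" where
  "nested_tet t j = (if j \<le> 4 then tet_vertex j else t *\<^sub>R tet_vertex (j - 4))"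

definition nested_mass :: "real \<Rightarrow> real \<Rightarrow> nat \<Rightarrow> real" where
  "nested_mass \<mu>1 \<mu>2 j = (if j \<le> 4 then \<mu>1 else \<mu>2)"

end

theory Submission
  imports Defs
begin

lemma norm3: "norm (x::real^3) = sqrt (x$1^2 + x$2^2 + x$3^2)"
  by (simp add: norm_vec_def L2_set_def sum_3)

lemma nt1: "nested_tet t 1 = vector [1,1,1]" "nested_tet t 2 = vector [-1,-1,1]"
  "nested_tet t 3 = vector [-1,1,-1]" "nested_tet t 4 = vector [1,-1,-1]"
  "nested_tet t 5 = vector [t,t,t]" "nested_tet t 6 = vector [-t,-t,t]"
  "nested_tet t 7 = vector [-t,t,-t]" "nested_tet t 8 = vector [t,-t,-t]" "nested_tet t (Suc 0) = vector [1,1,1]"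
  by (auto simp: nested_tet_def tet_vertex_def vec_eq_iff forall_3)

lemma dn: "norm (vector [a,b,c] - vector [d,e,f] :: real^3) = sqrt ((a-d)^2+(b-e)^2+(c-f)^2)"
  by (simp add: norm3)

lemma dc1: "(vector [a,b,c] - vector [d,e,f] :: real^3)$1 = a - d"
  by simp

lemma eqs:
  assumes "central_config 8 (nested_tet t) (nested_mass m1 m2)" "0<t" "t<1"
  obtains c where
   "m1 * ((1/sqrt 8^3 - c) * (-4)) + m2 * ((1/(sqrt 3*(1-t))^3 - c)*(t-1) + (1/sqrt(3*t^2+2*t+3)^3 - c)*(-t-3)) = 0"
   "m1 * ((1/(sqrt 3*(1-t))^3 - c)*(1-t) + (1/sqrt(3*t^2+2*t+3)^3 - c)*(-1-3*t)) + m2 * ((1/(t * sqrt 8)^3 - c)*(-4*t)) = 0"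
proof -
  from assms obtain c where c: "\<forall>i\<in>{1..8}. (\<Sum>j\<in>{1..8} - {i}. nested_mass m1 m2 j *\<^sub>R ((1 / norm (nested_tet t j - nested_tet t i) ^ 3 - c) *\<^sub>R (nested_tet t j - nested_tet t i))) = 0"
    unfolding central_config_def by blast
  have s1: "{1..8::nat} - {1} = {2,3,4,5,6,7,8}" by auto
  have s5: "{1..8::nat} - {5} = {1,2,3,4,6,7,8}" by auto
  have r: "sqrt (3 * (t - 1)^2) = sqrt 3 * (1-t)" "sqrt (3 * (1 - t)^2) = sqrt 3 * (1-t)"
    using assms(3) by (auto simp: real_sqrt_mult power2_commute[of t 1])
  have x: "sqrt (2 * (- t - 1)^2 + (t - 1)^2) = sqrt(3*t^2+2*t+3)"
     "sqrt (2 * (- 1 - t)^2 + (1 - t)^2) = sqrt(3*t^2+2*t+3)"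
    by (auto intro!: arg_cong[where f=sqrt] simp: power2_eq_square algebra_simps)
  have i: "sqrt (8*t^2) = t * sqrt 8" using assms(2) by (simp add: real_sqrt_mult)
  have e1: "(\<Sum>j\<in>{1..8} - {1}. nested_mass m1 m2 j *\<^sub>R ((1 / norm (nested_tet t j - nested_tet t 1) ^ 3 - c) *\<^sub>R (nested_tet t j - nested_tet t 1))) $ 1 = 0"
    using c by simp
  have e5: "(\<Sum>j\<in>{1..8} - {5}. nested_mass m1 m2 j *\<^sub>R ((1 / norm (nested_tet t j - nested_tet t 5) ^ 3 - c) *\<^sub>R (nested_tet t j - nested_tet t 5))) $ 1 = 0"
    using c by simp
  note e1' = e1[unfolded s1, simplified sum_component, simplified, simplified nt1 dn nested_mass_def, simplified]
  note e5' = e5[unfolded s5, simplified sum_component, simplified, simplified nt1 dn nested_mass_def, simplified]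
  note e1'' = e1'[unfolded r x i]
  note e5'' = e5'[unfolded r x i]
  show ?thesis
  proof (rule that[of c])
    have g1: "\<And>A B D. m2*(B - c)*(t-1) + (2*(m2*((-t-1)*(D - c))) + m2*(D-c)*(t-1)) = 4*(m1*(A-c)) \<Longrightarrow>
       m1 * ((A - c) * (-4)) + m2 * ((B - c)*(t-1) + (D - c)*(-t-3)) = 0"
      by (simp add: algebra_simps)
    show "m1 * ((1/sqrt 8^3 - c) * (-4)) + m2 * ((1/(sqrt 3*(1-t))^3 - c)*(t-1) + (1/sqrt(3*t^2+2*t+3)^3 - c)*(-t-3)) = 0"
      by (rule g1) (rule e1'')
    have g2: "\<And>B D E. m1*(B - c)*(1-t) + (2*(m1*((-1-t)*(D - c))) + (m1*(D-c)*(1-t) - 4*(m2*(t*(E-c))))) = 0 \<Longrightarrow>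
       m1 * ((B - c)*(1-t) + (D - c)*(-1-3*t)) + m2 * ((E - c)*(-4*t)) = 0"
      by (simp add: algebra_simps)
    show "m1 * ((1/(sqrt 3*(1-t))^3 - c)*(1-t) + (1/sqrt(3*t^2+2*t+3)^3 - c)*(-1-3*t)) + m2 * ((1/(t * sqrt 8)^3 - c)*(-4*t)) = 0"
      by (rule g2) (rule e5'')
  qed
qed
definition "AA = 1/sqrt 8^3"
definition "BB t = 1/(sqrt 3*(1-t))^3"
definition "DD t = 1/sqrt(3*t^2+2*t+3)^3"
definition "EE t = 1/(t * sqrt 8)^3"
definition "FF t = -4*t*AA - (1-t)*BB t + (1+3*t)*DD t"
definition "GG t = 4*t*EE t - t*(1-t)*BB t - t*(t+3)*DD t"
definition "KK t = t^3*((1-t)*BB t + (t+3)*DD t)"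

lemma BB_eq: assumes "x<1" shows "(1-x)*BB x = 1/(sqrt 3^3*(1-x)^2)"
proof -
  have b: "BB x = 1/(sqrt 3^3*(1-x)^3)"
    by (simp only: BB_def power_mult_distrib)
  have g: "(1-x)*(1/(a*(1-x)^3)) = 1/(a*(1-x)^2)" for a
    using assms by (simp add: power2_eq_square power3_eq_cube)
  show ?thesis unfolding b by (rule g)
qed

lemma elim:
  fixes m1 m2 A B D E c t :: real
  assumes "m1 * ((A - c) * (-4)) + m2 * ((B - c)*(t-1) + (D - c)*(-t-3)) = 0"
    "m1 * ((B - c)*(1-t) + (D - c)*(-1-3*t)) + m2 * ((E - c)*(-4*t)) = 0"
  shows "m1 * (-4*t*A - (1-t)*B + (1+3*t)*D) + m2 * (4*t*E - t*(1-t)*B - t*(t+3)*D) = 0"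
proof -
  have "t * (m1 * ((A - c) * (-4)) + m2 * ((B - c)*(t-1) + (D - c)*(-t-3))) -
     (m1 * ((B - c)*(1-t) + (D - c)*(-1-3*t)) + m2 * ((E - c)*(-4*t))) = 0"
    using assms by simp
  then show ?thesis by (simp add: algebra_simps)
qed

lemma GK: assumes "0<t" "t<1" shows "t^2 * GG t = 4*AA - KK t"
  using assms by (simp add: GG_def KK_def EE_def AA_def power_mult_distrib field_simps power3_eq_cube power2_eq_square)

lemma FF_neg: assumes "0<t" "t<1" shows "FF t < 0"
proof -
  let ?Q = "3*t^2+2*t+3"
  have Qp: "?Q > 0" using assms by (smt (verit) zero_le_power2)
  have poly: "27*((1+3*t)*(1-t)^2)^2 \<le> ?Q^3"
  proof -
    have "?Q^3 - 27*((1+3*t)*(1-t)^2)^2 = t^2*(360 + 224*t - 720*t^2 + 864*t^3 - 216*t^4)"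
      by (simp add: power2_eq_square power3_eq_cube power4_eq_xxxx algebra_simps)
    moreover have "360 + 224*t - 720*t^2 + 864*t^3 - 216*t^4 \<ge> 0"
    proof -
      have "360*(1-t^2)^2 \<ge> 0" by simp
      moreover have "t^4 \<le> t^3" using assms
        by (intro power_decreasing) auto
      moreover have "t \<ge> 0" "t^3 \<ge> 0" using assms by auto
      moreover have "(1-t^2)^2 = 1 - 2*t^2 + t^4" by (simp add: power2_eq_square power4_eq_xxxx algebra_simps)
      ultimately show ?thesis by linarith
    qed
    ultimately show ?thesis by (smt (verit) zero_le_power2 mult_nonneg_nonneg)
  qed
  have "sqrt (27*((1+3*t)*(1-t)^2)^2) \<le> sqrt (?Q^3)"
    using poly real_sqrt_le_mono by blast
  moreover have X0: "(1+3*t)*(1-t)^2 \<ge> 0" using assms by simp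
  moreover have "sqrt (27*((1+3*t)*(1-t)^2)^2) = sqrt 27 * \<bar>(1+3*t)*(1-t)^2\<bar>"
    by (simp only: real_sqrt_mult real_sqrt_abs)
  moreover have "sqrt (?Q^3) = sqrt ?Q ^ 3" by (simp only: real_sqrt_power)
  ultimately have "sqrt 27 * ((1+3*t)*(1-t)^2) \<le> sqrt ?Q ^3"
    by simp
  moreover have "sqrt 27 = sqrt 3 ^ 3"
    by (simp add: real_sqrt_power[symmetric])
  ultimately have le: "(1+3*t)*(sqrt 3^3*(1-t)^2) \<le> sqrt ?Q ^3" by (simp add: algebra_simps)
  have s3: "sqrt 3 ^ 3 > 0" by simp
  have sq: "sqrt ?Q ^ 3 > 0" using Qp by simp
  have "(1+3*t)*DD t \<le> (1-t)*BB t"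
  proof -
    have "(1-t)*BB t = 1/(sqrt 3^3*(1-t)^2)"
      using assms(2) by (rule BB_eq)
    moreover have "(1+3*t)*DD t = (1+3*t)/sqrt ?Q ^3" by (simp add: DD_def)
    moreover have "(1+3*t)/sqrt ?Q ^3 \<le> 1/(sqrt 3^3*(1-t)^2)"
      using le s3 sq assms by (simp add: divide_simps)
    ultimately show ?thesis by simp
  qed
  moreover have "4*t*AA > 0" using assms by (simp add: AA_def)
  ultimately show ?thesis unfolding FF_def by linarith
qed

lemma KK_mono: assumes "0<s" "s\<le>t" "t<1" shows "KK s \<le> KK t"
proof -
  have k1: "s^3*((1-s)*BB s) \<le> t^3*((1-t)*BB t)"
  proof -
    have e: "x^3*((1-x)*BB x) = x^3/(sqrt 3^3*(1-x)^2)" if "x<1" for x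
    proof -
      have b: "BB x = 1/(sqrt 3^3*(1-x)^3)"
        by (simp only: BB_def power_mult_distrib)
      have g: "(1-x)*(1/(a*(1-x)^3)) = 1/(a*(1-x)^2)" for a
        using that by (simp add: power2_eq_square power3_eq_cube)
      have "(1-x)*BB x = 1/(sqrt 3^3*(1-x)^2)"
        unfolding b by (rule g)
      then show ?thesis by simp
    qed
    have "s^3/(sqrt 3^3*(1-s)^2) \<le> t^3/(sqrt 3^3*(1-t)^2)"
      apply (rule frac_le)
      using assms by (auto intro!: power_mono mult_left_mono)
    then show ?thesis using e assms by simp
  qed
  have k2: "s^3*((s+3)*DD s) \<le> t^3*((t+3)*DD t)"
  proof -
    have e: "x^3*DD x = sqrt (x^2/(3*x^2+2*x+3))^3" if "x>0" for x
    proof -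
      have "3*x^2+2*x+3 > 0" using that by (smt (verit) zero_le_power2)
      then show ?thesis using that
        by (simp add: DD_def real_sqrt_divide power_divide)
    qed
    have "s^2/(3* s^2+2* s+3) \<le> t^2/(3*t^2+2*t+3)"
    proof -
      have p1: "3* s^2+2* s+3 > 0" "3*t^2+2*t+3 > 0" using assms by (smt (verit) zero_le_power2)+
      have "s^2*(3*t^2+2*t+3) \<le> t^2*(3* s^2+2* s+3)"
      proof -
        have "s^2*(3*t^2+2*t+3) = 3* s^2*t^2 + s*(2* s*t) + 3* s^2" by (simp add: power2_eq_square algebra_simps)
        moreover have "t^2*(3* s^2+2* s+3) = 3* s^2*t^2 + t*(2* s*t) + 3*t^2" by (simp add: power2_eq_square algebra_simps)
        moreover have "s*(2* s*t) \<le> t*(2* s*t)" using assms by (intro mult_right_mono) auto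
        moreover have "s^2 \<le> t^2" using assms by (intro power_mono) auto
        ultimately show ?thesis by linarith
      qed
      then show ?thesis using p1 by (simp add: divide_simps)
    qed
    moreover have "3* s^2+2* s+3 > 0" using assms by (smt (verit) zero_le_power2)
    ultimately have "sqrt (s^2/(3* s^2+2* s+3))^3 \<le> sqrt (t^2/(3*t^2+2*t+3))^3"
      by (intro power_mono) auto
    then have "(s+3) * sqrt (s^2/(3* s^2+2* s+3))^3 \<le> (t+3) * sqrt (t^2/(3*t^2+2*t+3))^3"
      using assms by (intro mult_mono) auto
    moreover have r: "x^3*((x+3)*DD x) = (x+3)*(x^3*DD x)" for x by (simp add: algebra_simps)
    ultimately show ?thesis unfolding r using e[of s] e[of t] assms by simp
  qed
  show ?thesis using k1 k2 unfolding KK_def by (simp add: algebra_simps)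
qed

lemma num1: "KK (1/2) \<le> 4*AA"
proof -
  have s3: "sqrt 3 \<ge> 17/10" by (rule real_le_rsqrt) (simp_all add: power2_eq_square)
  have c3: "sqrt 3^3 = 3* sqrt 3" by (simp add: power3_eq_cube)
  have b: "(1 - 1/2)*BB (1/2) = 4/sqrt 3^3" using BB_eq[of "1/2::real"] by (simp add: power2_eq_square)
  have b2: "4/sqrt 3^3 \<le> 4/(51/10)" unfolding c3 using s3
    by (intro divide_left_mono) auto
  have q: "sqrt (19/4) \<ge> 2" by (rule real_le_rsqrt) (simp_all add: power2_eq_square)
  have d: "DD (1/2) = 1/sqrt(19/4)^3" by (simp add: DD_def power2_eq_square)
  have q3: "sqrt(19/4)^3 \<ge> 2^3" using q by (intro power_mono) auto
  have d2: "DD (1/2) \<le> 1/8" unfolding d using q3 by (intro divide_left_mono) auto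
  have s8: "sqrt 8 \<le> 283/100" by (rule real_le_lsqrt) (simp_all add: power2_eq_square)
  have c8: "sqrt 8^3 = 8* sqrt 8" by (simp add: power3_eq_cube)
  have a: "4*AA \<ge> 4/(8*(283/100))" unfolding AA_def c8 using s8
    by (simp add: divide_simps)
  have "KK (1/2) = (1/8)*((1 - 1/2)*BB (1/2) + (7/2)*DD (1/2))" by (simp add: KK_def power3_eq_cube)
  also have "\<dots> \<le> (1/8)*(4/(51/10) + (7/2)*(1/8))" using b b2 d2 by simp
  also have "\<dots> \<le> 4/(8*(283/100))" by simp
  finally show ?thesis using a by linarith
qed

lemma num2: "KK (3/5) > 4*AA"
proof -
  have s3: "sqrt 3 \<le> 7/4" by (rule real_le_lsqrt) (simp_all add: power2_eq_square)
  have c3: "sqrt 3^3 = 3* sqrt 3" by (simp add: power3_eq_cube)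
  have b: "(1 - 3/5)*BB (3/5) = 1/(sqrt 3^3*(4/25))" using BB_eq[of "3/5::real"] by (simp add: power2_eq_square)
  have b2: "1/(sqrt 3^3*(4/25)) \<ge> 1/(3*(7/4)*(4/25))" unfolding c3 using s3
    by (intro divide_left_mono) auto
  have dpos: "DD (3/5) \<ge> 0" by (simp add: DD_def)
  have s8: "sqrt 8 \<ge> 28/10" by (rule real_le_rsqrt) (simp_all add: power2_eq_square)
  have c8: "sqrt 8^3 = 8* sqrt 8" by (simp add: power3_eq_cube)
  have a: "4*AA \<le> 4/(8*(28/10))" unfolding AA_def c8 using s8
    by (simp add: divide_simps)
  have "KK (3/5) = (27/125)*((1 - 3/5)*BB (3/5) + (18/5)*DD (3/5))" by (simp add: KK_def power3_eq_cube)
  also have "\<dots> \<ge> (27/125)*(1/(3*(7/4)*(4/25)))" using b b2 dpos by simp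
  finally show ?thesis using a by simp
qed


lemma sign_lemma:
  fixes m1 m2 f g :: real
  assumes "m1*f + m2*g = 0" "f < 0" "m1 \<noteq> 0"
  shows "g > 0 \<Longrightarrow> sgn m1 = sgn m2" "g < 0 \<Longrightarrow> sgn m1 = - sgn m2"
proof -
  have e: "sgn m1 * sgn f = - (sgn m2 * sgn g)"
    using arg_cong[where f=sgn, OF assms(1)[unfolded add_eq_0_iff]] by (simp add: sgn_mult)
  show "g > 0 \<Longrightarrow> sgn m1 = sgn m2" using e assms(2) by simp
  show "g < 0 \<Longrightarrow> sgn m1 = - sgn m2" using e assms(2) by simp
qed

lemma key:
  assumes "central_config 8 (nested_tet t) (nested_mass m1 m2)" "0<t" "t<1"
  shows "m1 * FF t + m2 * GG t = 0"
proof -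
  obtain c where e1: "m1 * ((1/sqrt 8^3 - c) * (-4)) + m2 * ((1/(sqrt 3*(1-t))^3 - c)*(t-1) + (1/sqrt(3*t^2+2*t+3)^3 - c)*(-t-3)) = 0"
   and e2: "m1 * ((1/(sqrt 3*(1-t))^3 - c)*(1-t) + (1/sqrt(3*t^2+2*t+3)^3 - c)*(-1-3*t)) + m2 * ((1/(t * sqrt 8)^3 - c)*(-4*t)) = 0"
    using eqs[OF assms] by blast
  show ?thesis unfolding FF_def GG_def AA_def BB_def DD_def EE_def
    by (rule elim[OF e1 e2])
qed

theorem theorem6:
  shows "\<exists>\<delta>::real. 0 < \<delta> \<and> \<delta> < 1 \<and>
    (\<forall>t \<mu>1 \<mu>2. 0 < t \<and> t < \<delta> \<and> \<mu>1 \<noteq> 0 \<and> \<mu>2 \<noteq> 0 \<and>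
        central_config 8 (nested_tet t) (nested_mass \<mu>1 \<mu>2) \<longrightarrow> sgn \<mu>1 = sgn \<mu>2) \<and>
    (\<forall>t \<mu>1 \<mu>2. \<delta> < t \<and> t < 1 \<and> \<mu>1 \<noteq> 0 \<and> \<mu>2 \<noteq> 0 \<and>
        central_config 8 (nested_tet t) (nested_mass \<mu>1 \<mu>2) \<longrightarrow> sgn \<mu>1 = - sgn \<mu>2)"
proof -
  define S where "S = {t::real. 0<t \<and> t<1 \<and> KK t \<le> 4*AA}"
  have half: "1/2 \<in> S" unfolding S_def using num1 by simp
  have ub: "s < 3/5" if "s \<in> S" for s
  proof (rule ccontr)
    assume "\<not> s < 3/5"
    then have "KK (3/5) \<le> KK s" using that unfolding S_def by (intro KK_mono) auto
    then show False using that num2 unfolding S_def by simp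
  qed
  have bdd: "bdd_above S" using ub by (meson bdd_above.I less_imp_le)
  have ne: "S \<noteq> {}" using half by blast
  define \<delta> where "\<delta> = Sup S"
  have d1: "1/2 \<le> \<delta>" unfolding \<delta>_def using half bdd by (rule cSup_upper)
  have d2: "\<delta> \<le> 3/5" unfolding \<delta>_def using ne by (rule cSup_least) (use ub in force)
  show ?thesis
  proof (intro exI[of _ \<delta>] conjI allI impI)
    show "0 < \<delta>" "\<delta> < 1" using d1 d2 by auto
  next
    fix t m1 m2 :: real
    assume a: "0 < t \<and> t < \<delta> \<and> m1 \<noteq> 0 \<and> m2 \<noteq> 0 \<and> central_config 8 (nested_tet t) (nested_mass m1 m2)"
    then have t1: "t < 1" using d2 by auto
    obtain s where s: "s \<in> S" "t < s" using a less_cSup_iff[OF ne bdd, of t] unfolding \<delta>_def by auto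
    have "KK t \<le> KK s" using s a unfolding S_def by (intro KK_mono) auto
    then have "KK t \<le> 4*AA" using s unfolding S_def by auto
    then have "t^2 * GG t \<ge> 0" using GK[of t] a t1 by auto
    then have g0: "GG t \<ge> 0" using a by (simp add: zero_le_mult_iff)
    have k: "m1 * FF t + m2 * GG t = 0" using key a t1 by blast
    have f: "FF t < 0" using FF_neg a t1 by blast
    have "GG t \<noteq> 0"
    proof
      assume "GG t = 0"
      then have "m1 * FF t = 0" using k by simp
      then show False using a f by simp
    qed
    then have "GG t > 0" using g0 by simp
    then show "sgn m1 = sgn m2" using sign_lemma(1)[OF k f] a by blast
  next
    fix t m1 m2 :: real
    assume a: "\<delta> < t \<and> t < 1 \<and> m1 \<noteq> 0 \<and> m2 \<noteq> 0 \<and> central_config 8 (nested_tet t) (nested_mass m1 m2)"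
    have t0: "0 < t" using a d1 by auto
    have "t \<notin> S"
    proof
      assume "t \<in> S"
      then have "t \<le> \<delta>" unfolding \<delta>_def using bdd by (rule cSup_upper)
      then show False using a by simp
    qed
    then have "KK t > 4*AA" using a t0 unfolding S_def by auto
    then have "t^2 * GG t < 0" using GK[of t] a t0 by auto
    then have g0: "GG t < 0" using t0 by (simp add: mult_less_0_iff)
    have k: "m1 * FF t + m2 * GG t = 0" using key a t0 by blast
    have f: "FF t < 0" using FF_neg a t0 by blast
    show "sgn m1 = - sgn m2" using sign_lemma(2)[OF k f] a g0 by blast
  qed
qed

end
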